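(* Consider problem (P) and suppose Assumptions A, B, C and E hold. If $\bar F$ is a KL function with exponent $\alpha\in[0,1)$, then $F$ is also a KL function with exponent $\alpha$.
   Context: Problem (P): $\min_{x\in\mathbb R^n}F(x):=f(x)+P_1(x)-P_2(x)+\delta_{\{g\le 0\}}(x)$, where $f:\mathbb R^n\to\mathbb R$ is continuously differentiable, $P_1,P_2:\mathbb R^n\to\mathbb R$ are convex and continuous, $g=(g_1,\dots,g_m):\mathbb R^n\to\mathbb R^m$ is continuous with $\{x:g(x)\le0\}\neq\emptyset$ (componentwise inequalities), $\delta_C$ the indicator function of $C$; $\partial$ is the limiting subdifferential. Assumption A: (i) $\nabla f$ is Lipschitz with modulus $L_f$; (ii) each $g_i$ is differentiable with $\nabla g_i$ Lipschitz with modulus $L_{g_i}$; (iii) $F$ is level-bounded. Assumption B (MFCQ): each $g_i$ is continuously differentiable and for every $x$ with $g(x)\le0$ there is $d$ with $\langle\nabla g_i(x),d\rangle<0$ for all $i\in I(x):=\{j:g_j(x)=0\}$. Assumption C: each $g_i$ is twice continuously differentiable. Assumption E: $P_2\equiv0$ and $f,g_1,\dots,g_m$ are convex. $\bar G(x,y,w)\in\mathbb R^m$ ($x,y\in\mathbb R^n,w\in\mathbb R^m$) has components $\bar G_i(x,y,w)=g_i(y)+\langle\nabla g_i(y),x-y\rangle+\frac{w_i}{2}\|x-y\|^2$, and $\bar F(x,y,w):=f(x)+P_1(x)-P_2(x)+\delta_{\{\bar G\le0\}}(x,y,w)$. KL function with exponent $\alpha\in[0,1)$: a proper closed $h$ such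 that at every $\hat x\in{\rm dom}\,\partial h$ there exist $a\in(0,\infty]$, a neighborhood $V$ of $\hat x$ and $a_0>0$ with $a_0(1-\alpha)(h(x)-h(\hat x))^{-\alpha}\,{\rm dist}(0,\partial h(x))\ge1$ for all $x\in V$ with $h(\hat x)<h(x)<h(\hat x)+a$. *)

theory Defs
  imports "HOL-Analysis.Analysis"
begin

definition proper_closed :: "('a::euclidean_space \<Rightarrow> ereal) \<Rightarrow> bool" where
  "proper_closed h \<longleftrightarrow> (\<forall>x. h x \<noteq> -\<infinity>) \<and> (\<exists>x. h x \<noteq> \<infinity>) \<and>
     (\<forall>x xk. xk \<longlonglongrightarrow> x \<longrightarrow> h x \<le> liminf (\<lambda>k. h (xk k)))"

definition frechet_subdiff :: "('a::euclidean_space \<Rightarrow> ereal) \<Rightarrow> 'a \<Rightarrow> 'a set" where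
  "frechet_subdiff h x = {v. \<bar>h x\<bar> \<noteq> \<infinity> \<and>
     (\<forall>\<epsilon>>0. \<exists>\<delta>>0. \<forall>z. norm (z - x) < \<delta> \<longrightarrow>
        h z \<ge> h x + ereal (v \<bullet> (z - x) - \<epsilon> * norm (z - x)))}"

definition limiting_subdiff :: "('a::euclidean_space \<Rightarrow> ereal) \<Rightarrow> 'a \<Rightarrow> 'a set" where
  "limiting_subdiff h x = {v. \<bar>h x\<bar> \<noteq> \<infinity> \<and>
     (\<exists>xk vk. xk \<longlonglongrightarrow> x \<and> (\<lambda>k. h (xk k)) \<longlonglongrightarrow> h x \<and>
        (\<forall>k. vk k \<in> frechet_subdiff h (xk k)) \<and> vk \<longlonglongrightarrow> v)}"

text \<open>KL function with exponent alpha. Convention dist(0, {}) = +infinity, so points with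
  empty subdifferential satisfy the inequality vacuously.\<close>
definition KL_exponent :: "('a::euclidean_space \<Rightarrow> ereal) \<Rightarrow> real \<Rightarrow> bool" where
  "KL_exponent h \<alpha> \<longleftrightarrow> proper_closed h \<and>
     (\<forall>xh. limiting_subdiff h xh \<noteq> {} \<longrightarrow>
        (\<exists>a::ereal. a > 0 \<and> (\<exists>V. open V \<and> xh \<in> V \<and> (\<exists>a0::real. a0 > 0 \<and>
          (\<forall>x\<in>V. h xh < h x \<and> h x < h xh + a \<longrightarrow> limiting_subdiff h x \<noteq> {} \<longrightarrow>
             a0 * (1 - \<alpha>) * (real_of_ereal (h x) - real_of_ereal (h xh)) powr (- \<alpha>)
               * infdist 0 (limiting_subdiff h x) \<ge> 1)))))"

definition Fobj :: "(real^'n \<Rightarrow> real) \<Rightarrow> (real^'n \<Rightarrow> real) \<Rightarrow> (real^'n \<Rightarrow> real)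
     \<Rightarrow> (real^'n \<Rightarrow> real^'m) \<Rightarrow> real^'n \<Rightarrow> ereal" where
  "Fobj f P1 P2 g x = (if \<forall>i. g x $ i \<le> 0 then ereal (f x + P1 x - P2 x) else \<infinity>)"

definition Gbar :: "(real^'n \<Rightarrow> real^'m) \<Rightarrow> ('m \<Rightarrow> real^'n \<Rightarrow> real^'n)
     \<Rightarrow> real^'n \<Rightarrow> real^'n \<Rightarrow> real^'m \<Rightarrow> 'm \<Rightarrow> real" where
  "Gbar g Dg x y w i = g y $ i + Dg i y \<bullet> (x - y) + w $ i / 2 * (norm (x - y))\<^sup>2"

definition Fbar :: "(real^'n \<Rightarrow> real) \<Rightarrow> (real^'n \<Rightarrow> real) \<Rightarrow> (real^'n \<Rightarrow> real)
     \<Rightarrow> (real^'n \<Rightarrow> real^'m) \<Rightarrow> ('m \<Rightarrow> real^'n \<Rightarrow> real^'n)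
     \<Rightarrow> (real^'n) \<times> (real^'n) \<times> (real^'m) \<Rightarrow> ereal" where
  "Fbar f P1 P2 g Dg = (\<lambda>(x, y, w). if \<forall>i. Gbar g Dg x y w i \<le> 0
       then ereal (f x + P1 x - P2 x) else \<infinity>)"

end

theory Submission imports Defs begin

lemma descent:
  fixes G :: "real^'n \<Rightarrow> real" and DG :: "real^'n \<Rightarrow> real^'n"
  assumes der: "\<And>x. (G has_derivative (\<lambda>h. DG x \<bullet> h)) (at x)"
    and lip: "L-lipschitz_on UNIV DG"
  shows "G z \<le> G y + DG y \<bullet> (z - y) + L * (norm (z - y))\<^sup>2"
proof -
  define d where "d = z - y"
  define \<phi> where "\<phi> = (\<lambda>t::real. G (y + t *\<^sub>R d))"
  have "\<And>t. (\<phi> has_derivative (\<lambda>h. DG (y + t *\<^sub>R d) \<bullet> (h *\<^sub>R d))) (at t within {0..1})"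
  proof -
    fix t
    have "((\<lambda>t::real. y + t *\<^sub>R d) has_derivative (\<lambda>h. h *\<^sub>R d)) (at t within {0..1})"
      by (auto intro!: derivative_eq_intros)
    from has_derivative_compose[OF this der] show "?thesis t"
      unfolding \<phi>_def o_def by (simp add: comp_def)
  qed
  from mvt_simple[of 0 1 \<phi>, OF _ this] obtain t where t: "t \<in> {0<..<1}"
    and eq: "\<phi> 1 - \<phi> 0 = DG (y + t *\<^sub>R d) \<bullet> d" by auto
  have "G z - G y - DG y \<bullet> d = (DG (y + t *\<^sub>R d) - DG y) \<bullet> d"
    using eq unfolding \<phi>_def d_def by (simp add: inner_diff_left)
  also have "\<dots> \<le> norm (DG (y + t *\<^sub>R d) - DG y) * norm d"
    by (rule norm_cauchy_schwarz)
  also have "\<dots> \<le> (L * norm (t *\<^sub>R d)) * norm d"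
    using lipschitz_onD[OF lip, of "y + t *\<^sub>R d" y]
    by (intro mult_right_mono) (auto simp: dist_norm)
  also have "\<dots> \<le> (L * norm d) * norm d"
    using t lipschitz_on_nonneg[OF lip]
    by (intro mult_right_mono mult_left_mono) (auto intro: mult_left_le_one_le)
  finally show ?thesis unfolding d_def by (simp add: power2_eq_square algebra_simps)
qed

lemma Fbar_diag: "Fbar f P1 P2 g Dg (x, x, w) = Fobj f P1 P2 g x"
  by (simp add: Fbar_def Gbar_def Fobj_def)

lemma frechet_incl:
  fixes g :: "real^'n \<Rightarrow> real^'m" and Dg :: "'m \<Rightarrow> real^'n \<Rightarrow> real^'n"
  assumes desc: "\<And>i y z. g z $ i \<le> g y $ i + Dg i y \<bullet> (z - y) + Lg i * (norm (z - y))\<^sup>2"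
    and w: "\<And>i. w $ i \<ge> 2 * Lg i + 1"
    and v: "v \<in> frechet_subdiff (Fobj f P1 P2 g) x"
  shows "(v, 0, 0) \<in> frechet_subdiff (Fbar f P1 P2 g Dg) (x, x, w)"
proof -
  let ?F = "Fobj f P1 P2 g"
  let ?B = "Fbar f P1 P2 g Dg"
  have fin: "\<bar>?F x\<bar> \<noteq> \<infinity>" using v by (simp add: frechet_subdiff_def)
  have main: "\<exists>\<delta>>0. \<forall>p. norm (p - (x, x, w)) < \<delta> \<longrightarrow>
        ?B p \<ge> ?B (x, x, w) + ereal ((v, 0, 0) \<bullet> (p - (x, x, w)) - \<epsilon> * norm (p - (x, x, w)))"
    if e: "\<epsilon> > 0" for \<epsilon>
  proof -
    from v e obtain \<delta> where d: "\<delta> > 0"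
      and dz: "\<And>z. norm (z - x) < \<delta> \<Longrightarrow> ?F z \<ge> ?F x + ereal (v \<bullet> (z - x) - \<epsilon> * norm (z - x))"
      unfolding frechet_subdiff_def by blast
    show ?thesis
    proof (intro exI[of _ "min \<delta> 1"] conjI allI impI)
      show "min \<delta> 1 > 0" using d by simp
      fix p :: "(real^'n) \<times> (real^'n) \<times> (real^'m)"
      assume np: "norm (p - (x, x, w)) < min \<delta> 1"
      obtain z y u where p: "p = (z, y, u)" by (cases p) auto
      have nz: "norm (z - x) \<le> norm (p - (x, x, w))"
        using norm_fst_le[of "z - x" "(y - x, u - w)"] by (simp add: p)
      have nu: "norm (u - w) \<le> norm (p - (x, x, w))"
        using order_trans[OF norm_snd_le[of "u - w" "y - x"] norm_snd_le[of "(y - x, u - w)" "z - x"]] by (simp add: p)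
      show "?B p \<ge> ?B (x, x, w) + ereal ((v, 0, 0) \<bullet> (p - (x, x, w)) - \<epsilon> * norm (p - (x, x, w)))"
      proof (cases "\<forall>i. Gbar g Dg z y u i \<le> 0")
        case False
        hence "?B p = \<infinity>" by (simp add: p Fbar_def)
        then show ?thesis by simp
      next
        case True
        have feas: "\<forall>i. g z $ i \<le> 0"
        proof
          fix i
          have "\<bar>u $ i - w $ i\<bar> \<le> norm (u - w)"
            using component_le_norm_cart[of "u - w" i] by simp
          hence "u $ i \<ge> 2 * Lg i" using w[of i] nu np by linarith
          hence "Lg i * (norm (z - y))\<^sup>2 \<le> u $ i / 2 * (norm (z - y))\<^sup>2"
            by (intro mult_right_mono) auto
          thus "g z $ i \<le> 0" using desc[of z i y] True[rule_format, of i]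
            by (simp add: Gbar_def)
        qed
        have Bp: "?B p = ?F z" using True feas by (simp add: p Fbar_def Fobj_def)
        have A: "?F z \<ge> ?F x + ereal (v \<bullet> (z - x) - \<epsilon> * norm (z - x))"
          using dz nz np by simp
        have Bq: "ereal (v \<bullet> (z - x) - \<epsilon> * norm (z - x)) \<ge>
              ereal ((v, 0, 0) \<bullet> (p - (x, x, w)) - \<epsilon> * norm (p - (x, x, w)))"
          using nz e by (simp add: p mult_left_mono)
        have "?F x + ereal ((v, 0, 0) \<bullet> (p - (x, x, w)) - \<epsilon> * norm (p - (x, x, w)))
              \<le> ?F x + ereal (v \<bullet> (z - x) - \<epsilon> * norm (z - x))"
          by (rule add_left_mono[OF Bq])
        hence "?F x + ereal ((v, 0, 0) \<bullet> (p - (x, x, w)) - \<epsilon> * norm (p - (x, x, w))) \<le> ?F z"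
          using A by (rule order_trans)
        thus ?thesis unfolding Bp Fbar_diag .
      qed
    qed
  qed
  show ?thesis unfolding frechet_subdiff_def
    using fin main by (simp add: Fbar_diag)
qed

lemma limiting_incl:
  fixes g :: "real^'n \<Rightarrow> real^'m" and Dg :: "'m \<Rightarrow> real^'n \<Rightarrow> real^'n"
  assumes desc: "\<And>i y z. g z $ i \<le> g y $ i + Dg i y \<bullet> (z - y) + Lg i * (norm (z - y))\<^sup>2"
    and w: "\<And>i. w $ i \<ge> 2 * Lg i + 1"
    and v: "v \<in> limiting_subdiff (Fobj f P1 P2 g) x"
  shows "(v, 0, 0) \<in> limiting_subdiff (Fbar f P1 P2 g Dg) (x, x, w)"
proof -
  have fin: "\<bar>Fobj f P1 P2 g x\<bar> \<noteq> \<infinity>" and ex: "\<exists>xk vk. xk \<longlonglongrightarrow> x \<and>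
        (\<lambda>k. Fobj f P1 P2 g (xk k)) \<longlonglongrightarrow> Fobj f P1 P2 g x \<and>
        (\<forall>k. vk k \<in> frechet_subdiff (Fobj f P1 P2 g) (xk k)) \<and> vk \<longlonglongrightarrow> v"
    using v unfolding limiting_subdiff_def by auto
  then obtain xk :: "nat \<Rightarrow> real^'n" and vk :: "nat \<Rightarrow> real^'n" where xk: "xk \<longlonglongrightarrow> x"
    and fk: "(\<lambda>k. Fobj f P1 P2 g (xk k)) \<longlonglongrightarrow> Fobj f P1 P2 g x"
    and vk: "\<forall>k. vk k \<in> frechet_subdiff (Fobj f P1 P2 g) (xk k)" and vv: "vk \<longlonglongrightarrow> v"
    by blast
  have t1: "(\<lambda>k. (xk k, xk k, w)) \<longlonglongrightarrow> (x, x, w)"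
    by (intro tendsto_Pair xk tendsto_const)
  have t2: "(\<lambda>k. (vk k, 0::real^'n, 0::real^'m)) \<longlonglongrightarrow> (v, 0, 0)"
    by (intro tendsto_Pair vv tendsto_const)
  have t3: "\<And>k. (vk k, 0, 0) \<in> frechet_subdiff (Fbar f P1 P2 g Dg) (xk k, xk k, w)"
    by (rule frechet_incl[OF desc w vk[rule_format]])
  show ?thesis unfolding limiting_subdiff_def mem_Collect_eq Fbar_diag
    apply (rule conjI, rule fin)
    apply (rule exI[of _ "\<lambda>k. (xk k, xk k, w)"])
    apply (rule exI[of _ "\<lambda>k. (vk k, 0::real^'n, 0::real^'m)"])
    using fk t1 t2 t3 by (simp add: Fbar_diag)
qed

lemma infdist_image_le:
  fixes S :: "(real^'n::finite) set" and T :: "((real^'n) \<times> (real^'n) \<times> (real^'m::finite)) set"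
  assumes "\<And>s. s \<in> S \<Longrightarrow> (s, 0, 0) \<in> T" "S \<noteq> {}"
  shows "infdist 0 T \<le> infdist 0 S"
proof -
  have "infdist 0 T \<le> dist 0 s" if "s \<in> S" for s
    using infdist_le[OF assms(1)[OF that], of 0] by (simp add: dist_norm norm_Pair)
  thus ?thesis unfolding infdist_notempty[OF assms(2)]
    by (intro cINF_greatest assms(2)) auto
qed

lemma Fobj_proper_closed:
  fixes f P1 P2 :: "real^'n \<Rightarrow> real" and g :: "real^'n \<Rightarrow> real^'m"
  assumes cf: "continuous_on UNIV (\<lambda>x. f x + P1 x - P2 x)"
    and cg: "continuous_on UNIV g"
    and feasible: "\<exists>x. \<forall>i. g x $ i \<le> 0"
  shows "proper_closed (Fobj f P1 P2 g)"
  unfolding proper_closed_def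
proof (intro conjI allI impI)
  show "\<And>x. Fobj f P1 P2 g x \<noteq> - \<infinity>" by (simp add: Fobj_def)
  show "\<exists>x. Fobj f P1 P2 g x \<noteq> \<infinity>" using feasible by (auto simp: Fobj_def)
  fix x and xk :: "nat \<Rightarrow> real^'n"
  assume xk: "xk \<longlonglongrightarrow> x"
  let ?c = "\<lambda>x. f x + P1 x - P2 x"
  have ge: "\<And>z. Fobj f P1 P2 g z \<ge> ereal (?c z)" by (simp add: Fobj_def)
  show "Fobj f P1 P2 g x \<le> liminf (\<lambda>k. Fobj f P1 P2 g (xk k))"
    unfolding le_Liminf_iff
  proof (intro allI impI)
    fix y assume y: "y < Fobj f P1 P2 g x"
    show "\<forall>\<^sub>F k in sequentially. y < Fobj f P1 P2 g (xk k)"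
    proof (cases "\<forall>i. g x $ i \<le> 0")
      case True
      hence Fx: "Fobj f P1 P2 g x = ereal (?c x)" by (simp add: Fobj_def)
      have lim: "(\<lambda>k. ereal (?c (xk k))) \<longlonglongrightarrow> ereal (?c x)"
        using continuous_on_tendsto_compose[OF cf xk] by (simp add: lim_ereal)
      have "\<forall>\<^sub>F k in sequentially. y < ereal (?c (xk k))"
        using order_tendstoD(1)[OF lim] y Fx by simp
      thus ?thesis by eventually_elim (use ge in \<open>blast intro: less_le_trans\<close>)
    next
      case False
      then obtain i where gi: "g x $ i > 0" by (auto simp: not_le)
      have "(\<lambda>k. g (xk k) $ i) \<longlonglongrightarrow> g x $ i"
        using tendsto_vec_nth[OF continuous_on_tendsto_compose[OF cg xk]] by simp
      hence ev: "\<forall>\<^sub>F k in sequentially. g (xk k) $ i > 0" using gi order_tendstoD(1) by blast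
      have yi: "y < \<infinity>" using y by auto
      show ?thesis using ev
      proof eventually_elim
        case (elim k)
        hence "Fobj f P1 P2 g (xk k) = \<infinity>" by (auto simp: Fobj_def not_le)
        thus ?case using yi by simp
      qed
    qed
  qed
qed

theorem mainTheorem12:
  fixes f P1 P2 :: "real^'n \<Rightarrow> real"
    and g :: "real^'n \<Rightarrow> real^'m"
    and Df :: "real^'n \<Rightarrow> real^'n"
    and Dg :: "'m \<Rightarrow> real^'n \<Rightarrow> real^'n"
    and Hg :: "'m \<Rightarrow> real^'n \<Rightarrow> real^'n^'n"
    and \<alpha> :: real
  assumes f_grad: "\<And>x. (f has_derivative (\<lambda>h. Df x \<bullet> h)) (at x)"
    and f_C1: "continuous_on UNIV Df"
    and P1_convex: "convex_on UNIV P1" and P1_cont: "continuous_on UNIV P1"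
    and P2_convex: "convex_on UNIV P2" and P2_cont: "continuous_on UNIV P2"
    and g_cont: "continuous_on UNIV g"
    and feasible: "\<exists>x. \<forall>i. g x $ i \<le> 0"
    and A1: "\<exists>Lf. Lf-lipschitz_on UNIV Df"
    and A2_grad: "\<And>i x. ((\<lambda>z. g z $ i) has_derivative (\<lambda>h. Dg i x \<bullet> h)) (at x)"
    and A2_lip: "\<And>i. \<exists>Lg. Lg-lipschitz_on UNIV (Dg i)"
    and A3: "\<And>r::real. bounded {x. Fobj f P1 P2 g x \<le> ereal r}"
    and B_C1: "\<And>i. continuous_on UNIV (Dg i)"
    and B_MFCQ: "\<And>x. (\<forall>i. g x $ i \<le> 0) \<Longrightarrow>
                   \<exists>d. \<forall>i. g x $ i = 0 \<longrightarrow> Dg i x \<bullet> d < 0"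
    and C_hess: "\<And>i x. (Dg i has_derivative (\<lambda>h. Hg i x *v h)) (at x)"
    and C_cont: "\<And>i. continuous_on UNIV (Hg i)"
    and E_P2: "\<And>x. P2 x = 0"
    and E_f: "convex_on UNIV f"
    and E_g: "\<And>i. convex_on UNIV (\<lambda>x. g x $ i)"
    and alpha: "0 \<le> \<alpha>" "\<alpha> < 1"
    and KL_bar: "KL_exponent (Fbar f P1 P2 g Dg) \<alpha>"
  shows "KL_exponent (Fobj f P1 P2 g) \<alpha>"
proof -
  let ?F = "Fobj f P1 P2 g"
  let ?B = "Fbar f P1 P2 g Dg"
  have "\<forall>i. \<exists>L. L-lipschitz_on UNIV (Dg i)" using A2_lip by blast
  then obtain Lg where Lg: "\<And>i. (Lg i)-lipschitz_on UNIV (Dg i)" by metis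
  have desc: "\<And>i y z. g z $ i \<le> g y $ i + Dg i y \<bullet> (z - y) + Lg i * (norm (z - y))\<^sup>2"
    by (rule descent[OF A2_grad Lg])
  define w :: "real^'m" where "w = (\<chi> i. 2 * Lg i + 1)"
  have w: "\<And>i. w $ i \<ge> 2 * Lg i + 1" by (simp add: w_def)
  have fc: "continuous_on UNIV f"
    using f_grad by (intro continuous_at_imp_continuous_on) (blast intro: has_derivative_continuous)
  have cf: "continuous_on UNIV (\<lambda>x. f x + P1 x - P2 x)"
    by (intro continuous_on_add continuous_on_diff fc P1_cont P2_cont)
  have pc: "proper_closed ?F" by (rule Fobj_proper_closed[OF cf g_cont feasible])
  have kb: "\<forall>xh. limiting_subdiff ?B xh \<noteq> {} \<longrightarrow>
        (\<exists>a::ereal. a > 0 \<and> (\<exists>V. open V \<and> xh \<in> V \<and> (\<exists>a0::real. a0 > 0 \<and>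
          (\<forall>x\<in>V. ?B xh < ?B x \<and> ?B x < ?B xh + a \<longrightarrow> limiting_subdiff ?B x \<noteq> {} \<longrightarrow>
             a0 * (1 - \<alpha>) * (real_of_ereal (?B x) - real_of_ereal (?B xh)) powr (- \<alpha>)
               * infdist 0 (limiting_subdiff ?B x) \<ge> 1))))"
    using KL_bar[unfolded KL_exponent_def, THEN conjunct2] .
  have inc: "\<And>v x. v \<in> limiting_subdiff ?F x \<Longrightarrow> (v, 0, 0) \<in> limiting_subdiff ?B (x, x, w)"
    by (rule limiting_incl[OF desc w])
  show ?thesis unfolding KL_exponent_def
  proof (intro conjI pc allI impI)
    fix xh assume ne: "limiting_subdiff ?F xh \<noteq> {}"
    then obtain v where "v \<in> limiting_subdiff ?F xh" by blast
    hence "limiting_subdiff ?B (xh, xh, w) \<noteq> {}" using inc by blast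
    from kb[rule_format, OF this] obtain a V a0 where a: "a > 0" and V: "open V" "(xh, xh, w) \<in> V"
      and a0: "a0 > 0"
      and ineq: "\<And>x. x \<in> V \<Longrightarrow> ?B (xh, xh, w) < ?B x \<and> ?B x < ?B (xh, xh, w) + a \<Longrightarrow>
             limiting_subdiff ?B x \<noteq> {} \<Longrightarrow>
             a0 * (1 - \<alpha>) * (real_of_ereal (?B x) - real_of_ereal (?B (xh, xh, w))) powr (- \<alpha>)
               * infdist 0 (limiting_subdiff ?B x) \<ge> 1"
      by blast
    define V' where "V' = (\<lambda>x. (x, x, w)) -` V"
    have oV': "open V'" unfolding V'_def
      by (rule open_vimage[OF V(1)]) (intro continuous_intros)
    have xV': "xh \<in> V'" using V(2) by (simp add: V'_def)
    show "\<exists>a::ereal. a > 0 \<and> (\<exists>V. open V \<and> xh \<in> V \<and> (\<exists>a0::real. a0 > 0 \<and>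
          (\<forall>x\<in>V. ?F xh < ?F x \<and> ?F x < ?F xh + a \<longrightarrow> limiting_subdiff ?F x \<noteq> {} \<longrightarrow>
             a0 * (1 - \<alpha>) * (real_of_ereal (?F x) - real_of_ereal (?F xh)) powr (- \<alpha>)
               * infdist 0 (limiting_subdiff ?F x) \<ge> 1)))"
    proof (intro exI[of _ a] conjI exI[of _ V'] exI[of _ a0] ballI impI)
      show "a > 0" "open V'" "xh \<in> V'" "a0 > 0" by (fact a oV' xV' a0)+
      fix x assume x: "x \<in> V'" and r: "?F xh < ?F x \<and> ?F x < ?F xh + a"
        and nx: "limiting_subdiff ?F x \<noteq> {}"
      have nb: "limiting_subdiff ?B (x, x, w) \<noteq> {}" using nx inc by blast
      have xV: "(x, x, w) \<in> V" using x by (simp add: V'_def)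
      have I: "1 \<le> a0 * (1 - \<alpha>) * (real_of_ereal (?F x) - real_of_ereal (?F xh)) powr (- \<alpha>)
               * infdist 0 (limiting_subdiff ?B (x, x, w))"
        using ineq[OF xV _ nb] r by (simp add: Fbar_diag)
      have D: "infdist 0 (limiting_subdiff ?B (x, x, w)) \<le> infdist 0 (limiting_subdiff ?F x)"
        by (rule infdist_image_le[OF inc nx])
      have C: "0 \<le> a0 * (1 - \<alpha>) * (real_of_ereal (?F x) - real_of_ereal (?F xh)) powr (- \<alpha>)"
        using a0 alpha by simp
      show "1 \<le> a0 * (1 - \<alpha>) * (real_of_ereal (?F x) - real_of_ereal (?F xh)) powr (- \<alpha>)
               * infdist 0 (limiting_subdiff ?F x)"
        using I mult_left_mono[OF D C] by linarith
    qed
  qed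
qed

end
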